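(* Let $\sigma:\mathbb R\to\mathbb R$ be a differentiable activation and let $f_{\theta_{\mathrm{wide}}}$ be a fully-connected network model with $M_{\mathrm{wide}}$ parameters. Then every function $f^*$ in the function space of any narrower fully-connected network satisfies $O_{f_{\theta_{\mathrm{wide}}}}(f^* )<M_{\mathrm{wide}}$; that is, $f^*$ has $n$-sample LLR-guarantee for the model $f_{\theta_{\mathrm{wide}}}$ for some $n<M_{\mathrm{wide}}$.
   Context: A fully-connected network $\mathrm{NN}(\{m_l\}_{l=0}^L)$, $L\geq2$, with $m_0=d$ and $m_L=1$ has parameters $\theta=(W^{[1]},b^{[1]},\dots,W^{[L]},b^{[L]})$ with $W^{[l]}\in\mathbb R^{m_l\times m_{l-1}}$, $b^{[l]}\in\mathbb R^{m_l}$ (a vector in $\mathbb R^M$, $M=\sum_{l=0}^{L-1}(m_l+1)m_{l+1}$), and output $f_\theta(x)=W^{[L]}f^{[L-1]}(x)+b^{[L]}$, where $f^{[0]}(x)=x$ and $f^{[l]}(x)=\sigma(W^{[l]}f^{[l-1]}(x)+b^{[l]})$ for $l\in[L-1]$. A network $\mathrm{NN}(\{m_l\})$ is narrower than $\mathrm{NN}'(\{m'_l\})$ (same $L$) if $m'_0=m_0$, $m'_L=m_L$, $m'_l\geq m_l$ for all $l\in[L-1]$, and $\sum_{l=1}^{L-1}(m'_l-m_l)>0$. The loss $\ell:\mathbb R\times\mathbb R\to[0,\infty)$ is continuously differentiable with $\ell(u,v)=0$ iff $u=v$. For a model $h_\theta$, $\theta\in\mathbb R^M$, and $f^*$ in its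 function space: $\mathcal M_{f^*}=\{\theta:h_\theta=f^*\}$; a dataset of size $n$ from $f^*$ is $\{(x_i,f^*(x_i))\}_{i=1}^n$ with empirical loss $\frac1n\sum_i\ell(u(x_i),f^*(x_i))$ (identically $0$ if $n=0$); the tangent hyperplane at $\theta'$ is $\{h(\cdot;\theta')+a^\top\nabla_\theta h(\cdot;\theta'):a\in\mathbb R^M\}$; $f^*$ has $n$-sample LLR-guarantee if for some dataset of size $n$ from $f^*$ and some $\theta'\in\mathcal M_{f^*}$ the set of minimizers of the empirical loss over the tangent hyperplane at $\theta'$ is exactly $\{f^*\}$; $O_h(f^* )$ is the smallest such $n\geq0$. *)

theory Defs
  imports "HOL-Analysis.Analysis"
begin

text \<open>An architecture is a list of widths [m_0, ..., m_L]; L = length ms - 1.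
 Parameter vectors in R^M are functions nat => real whose coordinates k >= M vanish.
 Inputs in R^d are functions nat => real of which only coordinates j < d are read.\<close>

definition depth :: "nat list \<Rightarrow> nat" where
  "depth ms = length ms - 1"

definition valid_arch :: "nat list \<Rightarrow> bool" where
  "valid_arch ms \<longleftrightarrow> depth ms \<ge> 2 \<and> ms ! depth ms = 1 \<and> (\<forall>l \<le> depth ms. ms ! l \<ge> 1)"

text \<open>Offset of the parameters (W^[l+1], b^[l+1]) in the flattened parameter vector.\<close>
definition poff :: "nat list \<Rightarrow> nat \<Rightarrow> nat" where
  "poff ms l = (\<Sum>k<l. (ms ! k + 1) * ms ! Suc k)"

definition nparams :: "nat list \<Rightarrow> nat" where
  "nparams ms = poff ms (depth ms)"

definition Wt :: "nat list \<Rightarrow> (nat \<Rightarrow> real) \<Rightarrow> nat \<Rightarrow> nat \<Rightarrow> nat \<Rightarrow> real" where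
  "Wt ms \<theta> l i j = \<theta> (poff ms l + i * ms ! l + j)"

definition Bs :: "nat list \<Rightarrow> (nat \<Rightarrow> real) \<Rightarrow> nat \<Rightarrow> nat \<Rightarrow> real" where
  "Bs ms \<theta> l i = \<theta> (poff ms l + ms ! Suc l * ms ! l + i)"

definition preact :: "nat list \<Rightarrow> (nat \<Rightarrow> real) \<Rightarrow> nat \<Rightarrow> (nat \<Rightarrow> real) \<Rightarrow> nat \<Rightarrow> real" where
  "preact ms \<theta> l h i = (\<Sum>j<ms ! l. Wt ms \<theta> l i j * h j) + Bs ms \<theta> l i"

primrec hidden :: "(real \<Rightarrow> real) \<Rightarrow> nat list \<Rightarrow> (nat \<Rightarrow> real) \<Rightarrow> (nat \<Rightarrow> real) \<Rightarrow> nat \<Rightarrow> nat \<Rightarrow> real" where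
  "hidden \<sigma> ms \<theta> x 0 = x"
| "hidden \<sigma> ms \<theta> x (Suc l) = (\<lambda>i. \<sigma> (preact ms \<theta> l (hidden \<sigma> ms \<theta> x l) i))"

definition nn_out :: "(real \<Rightarrow> real) \<Rightarrow> nat list \<Rightarrow> (nat \<Rightarrow> real) \<Rightarrow> (nat \<Rightarrow> real) \<Rightarrow> real" where
  "nn_out \<sigma> ms \<theta> x = preact ms \<theta> (depth ms - 1) (hidden \<sigma> ms \<theta> x (depth ms - 1)) 0"

definition narrower :: "nat list \<Rightarrow> nat list \<Rightarrow> bool" where
  "narrower ms ms' \<longleftrightarrow> length ms' = length ms \<and> ms' ! 0 = ms ! 0
     \<and> ms' ! depth ms = ms ! depth ms
     \<and> (\<forall>l\<in>{1..depth ms - 1}. ms' ! l \<ge> ms ! l)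
     \<and> (\<Sum>l=1..depth ms - 1. ms' ! l - ms ! l) > 0"

definition params :: "nat \<Rightarrow> (nat \<Rightarrow> real) set" where
  "params M = {\<theta>. \<forall>k\<ge>M. \<theta> k = 0}"

definition target_set :: "((nat \<Rightarrow> real) \<Rightarrow> 'x \<Rightarrow> real) \<Rightarrow> nat \<Rightarrow> ('x \<Rightarrow> real) \<Rightarrow> (nat \<Rightarrow> real) set" where
  "target_set h M f = {\<theta> \<in> params M. h \<theta> = f}"

definition pderiv_param :: "((nat \<Rightarrow> real) \<Rightarrow> 'x \<Rightarrow> real) \<Rightarrow> (nat \<Rightarrow> real) \<Rightarrow> nat \<Rightarrow> 'x \<Rightarrow> real" where
  "pderiv_param h \<theta> k x = deriv (\<lambda>t. h (\<theta>(k := t)) x) (\<theta> k)"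

definition tangent :: "((nat \<Rightarrow> real) \<Rightarrow> 'x \<Rightarrow> real) \<Rightarrow> nat \<Rightarrow> (nat \<Rightarrow> real) \<Rightarrow> ('x \<Rightarrow> real) set" where
  "tangent h M \<theta> = {(\<lambda>x. h \<theta> x + (\<Sum>k<M. a k * pderiv_param h \<theta> k x)) | a. True}"

definition emp_loss :: "(real \<Rightarrow> real \<Rightarrow> real) \<Rightarrow> nat \<Rightarrow> (nat \<Rightarrow> 'x) \<Rightarrow> ('x \<Rightarrow> real) \<Rightarrow> ('x \<Rightarrow> real) \<Rightarrow> real" where
  "emp_loss lossf n xs f u = (if n = 0 then 0 else (1 / real n) * (\<Sum>i<n. lossf (u (xs i)) (f (xs i))))"

definition has_LLR :: "(real \<Rightarrow> real \<Rightarrow> real) \<Rightarrow> ((nat \<Rightarrow> real) \<Rightarrow> 'x \<Rightarrow> real) \<Rightarrow> nat \<Rightarrow> ('x \<Rightarrow> real) \<Rightarrow> nat \<Rightarrow> bool" where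
  "has_LLR lossf h M f n \<longleftrightarrow> (\<exists>xs. \<exists>\<theta>'\<in>target_set h M f.
      {u \<in> tangent h M \<theta>'. \<forall>v\<in>tangent h M \<theta>'. emp_loss lossf n xs f u \<le> emp_loss lossf n xs f v} = {f})"

definition O_LLR :: "(real \<Rightarrow> real \<Rightarrow> real) \<Rightarrow> ((nat \<Rightarrow> real) \<Rightarrow> 'x \<Rightarrow> real) \<Rightarrow> nat \<Rightarrow> ('x \<Rightarrow> real) \<Rightarrow> nat" where
  "O_LLR lossf h M f = (LEAST n. has_LLR lossf h M f n)"

definition admissible_loss :: "(real \<Rightarrow> real \<Rightarrow> real) \<Rightarrow> bool" where
  "admissible_loss lossf \<longleftrightarrow> (\<forall>u v. lossf u v \<ge> 0) \<and> (\<forall>u v. lossf u v = 0 \<longleftrightarrow> u = v)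
     \<and> (\<exists>g1 g2. continuous_on UNIV g1 \<and> continuous_on UNIV g2 \<and>
          (\<forall>p. ((\<lambda>q. lossf (fst q) (snd q)) has_derivative (\<lambda>h. g1 p * fst h + g2 p * snd h)) (at p)))"

end

theory Submission
  imports Defs
begin

lemma poff_Suc: "poff ms (Suc l) = poff ms l + (ms!l + 1) * ms!Suc l"
  by (simp add: poff_def)

lemma poff_mono: "l \<le> l' \<Longrightarrow> poff ms l \<le> poff ms l'"
  unfolding poff_def by (rule sum_mono2) auto

lemma enc_lt: fixes i j l :: nat assumes a: "i < ms!Suc l" "j < ms!l" shows "i * ms!l + j < ms!Suc l * ms!l"
proof -
  have "i * ms!l + j < Suc i * ms!l" using a by simp
  also have "\<dots> \<le> ms!Suc l * ms!l" using a by (intro mult_le_mono1) simp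
  finally show ?thesis .
qed

lemma enc_lt_poff: "i < ms!Suc l \<Longrightarrow> j < ms!l \<Longrightarrow> poff ms l + i * ms!l + j < poff ms (Suc l)"
  using enc_lt[of i ms l j] by (simp add: poff_Suc algebra_simps)

lemma benc_lt_poff: "i < ms!Suc l \<Longrightarrow> poff ms l + ms!Suc l * ms!l + i < poff ms (Suc l)"
  by (simp add: poff_Suc algebra_simps)

lemma enc_inj:
  assumes a: "i < ms!Suc l" "j < ms!l" "i' < ms!Suc l'" "j' < ms!l'"
    and e: "poff ms l + i*ms!l + j = poff ms l' + i'*ms!l' + j'"
  shows "l = l' \<and> i = i' \<and> j = j'"
proof -
  have "\<not> l < l'"
  proof
    assume "l < l'"
    then have "poff ms (Suc l) \<le> poff ms l'" by (intro poff_mono) simp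
    with enc_lt_poff[OF a(1,2)] e show False by linarith
  qed
  moreover have "\<not> l' < l"
  proof
    assume "l' < l"
    then have "poff ms (Suc l') \<le> poff ms l" by (intro poff_mono) simp
    with enc_lt_poff[OF a(3,4)] e show False by linarith
  qed
  ultimately have ll: "l = l'" by simp
  with e have e2: "i*ms!l + j = i'*ms!l + j'" by simp
  have "(i*ms!l + j) div ms!l = i" "(i*ms!l + j) mod ms!l = j" using a(2) by auto
  moreover have "(i'*ms!l + j') div ms!l = i'" "(i'*ms!l + j') mod ms!l = j'" using a(4) ll by auto
  ultimately show ?thesis using e2 ll by metis
qed

lemma enc_benc:
  assumes a: "i < ms!Suc l" "j < ms!l" "i' < ms!Suc l'"
  shows "poff ms l + i*ms!l + j \<noteq> poff ms l' + ms!Suc l' * ms!l' + i'"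
proof (cases l l' rule: linorder_cases)
  case less
  then have "poff ms (Suc l) \<le> poff ms l'" by (intro poff_mono) simp
  with enc_lt_poff[OF a(1,2)] show ?thesis by linarith
next
  case equal
  with enc_lt[OF a(1,2)] show ?thesis by simp
next
  case greater
  then have "poff ms (Suc l') \<le> poff ms l" by (intro poff_mono) simp
  with benc_lt_poff[OF a(3)] show ?thesis by linarith
qed

lemma benc_inj:
  assumes a: "i < ms!Suc l" "i' < ms!Suc l'"
    and e: "poff ms l + ms!Suc l * ms!l + i = poff ms l' + ms!Suc l' * ms!l' + i'"
  shows "l = l' \<and> i = i'"
proof -
  have "\<not> l < l'"
  proof
    assume "l < l'"
    then have "poff ms (Suc l) \<le> poff ms l'" by (intro poff_mono) simp
    with benc_lt_poff[OF a(1)] e show False by linarith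
  qed
  moreover have "\<not> l' < l"
  proof
    assume "l' < l"
    then have "poff ms (Suc l') \<le> poff ms l" by (intro poff_mono) simp
    with benc_lt_poff[OF a(2)] e show False by linarith
  qed
  ultimately show ?thesis using e by simp
qed

lemma pts_exist:
  fixes p :: "nat \<Rightarrow> 'x \<Rightarrow> real"
  shows "card {k. k<N \<and> p k \<noteq> (\<lambda>x. 0)} \<le> m \<Longrightarrow> \<exists>xs n. n \<le> m \<and>
    (\<forall>a. (\<forall>i<n. (\<Sum>k<N. a k * p k (xs i)) = 0) \<longrightarrow> (\<forall>x. (\<Sum>k<N. a k * p k x) = 0))"
proof (induction m arbitrary: p)
  case 0
  then have "\<forall>k<N. p k = (\<lambda>x. 0)" by auto
  then show ?case by auto
next
  case (Suc m)
  show ?case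
  proof (cases "\<forall>k<N. p k = (\<lambda>x. 0)")
    case True
    then show ?thesis by auto
  next
    case False
    then obtain k x0 where k: "k < N" "p k x0 \<noteq> 0" by fastforce
    define q where "q j = (\<lambda>y. p j y - p j x0 / p k x0 * p k y)" for j
    have qk: "q k = (\<lambda>x. 0)" using k(2) by (auto simp: q_def)
    have sub: "{j. j<N \<and> q j \<noteq> (\<lambda>x. 0)} \<subseteq> {j. j<N \<and> p j \<noteq> (\<lambda>x. 0)} - {k}"
    proof
      fix j assume j: "j \<in> {j. j<N \<and> q j \<noteq> (\<lambda>x. 0)}"
      then have "j \<noteq> k" using qk by auto
      moreover have "p j \<noteq> (\<lambda>x. 0)"
      proof
        assume "p j = (\<lambda>x. 0)"
        then have "q j = (\<lambda>x. 0)" by (simp add: q_def)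
        with j show False by simp
      qed
      ultimately show "j \<in> {j. j<N \<and> p j \<noteq> (\<lambda>x. 0)} - {k}" using j by simp
    qed
    have "card {j. j<N \<and> q j \<noteq> (\<lambda>x. 0)} \<le> card ({j. j<N \<and> p j \<noteq> (\<lambda>x. 0)} - {k})"
      by (intro card_mono sub) auto
    also have "\<dots> = card {j. j<N \<and> p j \<noteq> (\<lambda>x. 0)} - 1"
      using k by (subst card_Diff_singleton) auto
    also have "\<dots> \<le> m" using Suc.prems by simp
    finally obtain xs n where n: "n \<le> m" and
      H: "\<forall>a. (\<forall>i<n. (\<Sum>j<N. a j * q j (xs i)) = 0) \<longrightarrow> (\<forall>x. (\<Sum>j<N. a j * q j x) = 0)"
      using Suc.IH by blast
    define ys where "ys i = (if i = 0 then x0 else xs (i - 1))" for i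
    have ident: "(\<Sum>j<N. a j * q j y) = (\<Sum>j<N. a j * p j y) - (\<Sum>j<N. a j * p j x0) / p k x0 * p k y"
      for a y
    proof -
      have e1: "(\<Sum>j<N. a j * p j x0) / p k x0 * p k y = (\<Sum>j<N. a j * p j x0 / p k x0 * p k y)"
        by (simp add: sum_divide_distrib sum_distrib_right)
      have "(\<Sum>j<N. a j * q j y) = (\<Sum>j<N. a j * p j y - a j * p j x0 / p k x0 * p k y)"
        by (rule sum.cong) (auto simp: q_def algebra_simps)
      also have "\<dots> = (\<Sum>j<N. a j * p j y) - (\<Sum>j<N. a j * p j x0 / p k x0 * p k y)"
        by (rule sum_subtractf)
      finally show ?thesis using e1 by simp
    qed
    show ?thesis
    proof (intro exI conjI allI impI)
      show "Suc n \<le> Suc m" using n by simp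
    next
      fix a x
      assume A: "\<forall>i<Suc n. (\<Sum>j<N. a j * p j (ys i)) = 0"
      then have z: "(\<Sum>j<N. a j * p j x0) = 0" by (auto simp: ys_def)
      have id2: "(\<Sum>j<N. a j * q j y) = (\<Sum>j<N. a j * p j y)" for y
        using ident[of a y] z by simp
      have "\<forall>i<n. (\<Sum>j<N. a j * q j (xs i)) = 0"
      proof (intro allI impI)
        fix i assume "i < n"
        then have "(\<Sum>j<N. a j * p j (ys (Suc i))) = 0" using A by simp
        then show "(\<Sum>j<N. a j * q j (xs i)) = 0" by (simp add: id2 ys_def)
      qed
      with H have "(\<Sum>j<N. a j * q j x) = 0" by blast
      then show "(\<Sum>j<N. a j * p j x) = 0" by (simp add: id2)
    qed
  qed
qed


definition compat where
  "compat ms ms' \<theta> \<theta>'' \<longleftrightarrow>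
    (\<forall>l<depth ms. \<forall>i<ms!Suc l. \<forall>j<ms'!l. Wt ms' \<theta>'' l i j = (if j<ms!l then Wt ms \<theta> l i j else 0))
  \<and> (\<forall>l<depth ms. \<forall>i<ms!Suc l. Bs ms' \<theta>'' l i = Bs ms \<theta> l i)"

lemma preact_eq:
  assumes le: "ms!l \<le> ms'!l" and i: "i < ms!Suc l"
    and W: "\<forall>j<ms'!l. Wt ms' \<theta>' l i j = (if j<ms!l then Wt ms \<theta> l i j else 0)"
    and B: "Bs ms' \<theta>' l i = Bs ms \<theta> l i" and h: "\<forall>j<ms!l. h' j = h j"
  shows "preact ms' \<theta>' l h' i = preact ms \<theta> l h i"
proof -
  have "(\<Sum>j<ms'!l. Wt ms' \<theta>' l i j * h' j) = (\<Sum>j<ms!l. Wt ms \<theta> l i j * h j)"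
    by (rule sum.mono_neutral_cong_right) (use le W h in auto)
  then show ?thesis unfolding preact_def using B by simp
qed

lemma hidden_eq:
  assumes c: "compat ms ms' \<theta> \<theta>'" and le: "\<forall>l\<le>depth ms. ms!l \<le> ms'!l"
  shows "l < depth ms \<Longrightarrow> i < ms!l \<Longrightarrow> hidden \<sigma> ms' \<theta>' x l i = hidden \<sigma> ms \<theta> x l i"
proof (induction l arbitrary: i)
  case 0
  then show ?case by simp
next
  case (Suc l)
  have "preact ms' \<theta>' l (hidden \<sigma> ms' \<theta>' x l) i = preact ms \<theta> l (hidden \<sigma> ms \<theta> x l) i"
    by (rule preact_eq) (use Suc c le in \<open>auto simp: compat_def\<close>)
  then show ?case by simp
qed

lemma nn_out_eq:
  assumes c: "compat ms ms' \<theta> \<theta>'" and le: "\<forall>l\<le>depth ms. ms!l \<le> ms'!l"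
    and len: "length ms' = length ms" and v: "valid_arch ms"
  shows "nn_out \<sigma> ms' \<theta>' = nn_out \<sigma> ms \<theta>"
proof
  fix x
  have L: "depth ms \<ge> 2" "ms ! depth ms = 1" using v by (auto simp: valid_arch_def)
  have d: "depth ms' = depth ms" using len by (simp add: depth_def)
  have s: "Suc (depth ms - 1) = depth ms" using L by simp
  have "preact ms' \<theta>' (depth ms - 1) (hidden \<sigma> ms' \<theta>' x (depth ms - 1)) 0
      = preact ms \<theta> (depth ms - 1) (hidden \<sigma> ms \<theta> x (depth ms - 1)) 0"
    by (rule preact_eq) (use c le L s hidden_eq[OF c le] in \<open>auto simp: compat_def\<close>)
  then show "nn_out \<sigma> ms' \<theta>' x = nn_out \<sigma> ms \<theta> x" by (simp add: nn_out_def d)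
qed


lemma main_embed:
  assumes v: "valid_arch ms" "valid_arch ms'" and n: "narrower ms ms'"
  shows "\<exists>\<theta>' k0. \<theta>' \<in> params (nparams ms') \<and> k0 < nparams ms' \<and>
     (\<forall>t. nn_out \<sigma> ms' (\<theta>'(k0 := t)) = nn_out \<sigma> ms \<theta>) \<and> nn_out \<sigma> ms' \<theta>' = nn_out \<sigma> ms \<theta>"
proof -
  define L where "L = depth ms"
  have len: "length ms' = length ms" using n by (simp add: narrower_def)
  have d: "depth ms' = L" using len by (simp add: depth_def L_def)
  have L2: "L \<ge> 2" using v by (simp add: valid_arch_def L_def)
  have pos': "\<forall>l\<le>L. ms'!l \<ge> 1" using v d by (simp add: valid_arch_def)
  have le: "\<forall>l\<le>L. ms!l \<le> ms'!l"
  proof (intro allI impI)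
    fix l assume "l \<le> L"
    then consider "l = 0" | "l = L" | "l \<in> {1..L-1}" by fastforce
    then show "ms!l \<le> ms'!l" using n by cases (auto simp: narrower_def L_def)
  qed
  obtain l0 where l0: "l0 \<in> {1..L-1}" "ms!l0 < ms'!l0"
  proof -
    have "(\<Sum>l=1..L-1. ms'!l - ms!l) > 0" using n by (simp add: narrower_def L_def)
    then obtain l where "l \<in> {1..L-1}" "ms'!l - ms!l \<noteq> 0"
      by (metis (no_types, lifting) less_irrefl sum.neutral)
    then show ?thesis using that by auto
  qed
  define EW where "EW k \<longleftrightarrow> (\<exists>l i j. l<L \<and> i<ms!Suc l \<and> j<ms!l \<and> k = poff ms' l + i*ms'!l + j)" for k
  define EB where "EB k \<longleftrightarrow> (\<exists>l i. l<L \<and> i<ms!Suc l \<and> k = poff ms' l + ms'!Suc l * ms'!l + i)" for k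
  define th where "th k = (if EW k then (SOME v. \<exists>l i j. l<L \<and> i<ms!Suc l \<and> j<ms!l \<and> k = poff ms' l + i*ms'!l + j \<and> v = \<theta> (poff ms l + i*ms!l + j))
     else if EB k then (SOME v. \<exists>l i. l<L \<and> i<ms!Suc l \<and> k = poff ms' l + ms'!Suc l * ms'!l + i \<and> v = \<theta> (poff ms l + ms!Suc l * ms!l + i)) else 0)" for k
  have thW: "th (poff ms' l + i*ms'!l + j) = \<theta> (poff ms l + i*ms!l + j)"
    if a: "l<L" "i<ms!Suc l" "j<ms!l" for l i j
  proof -
    have b: "i < ms'!Suc l" "j < ms'!l" using a le by (auto intro: less_le_trans)
    have "EW (poff ms' l + i*ms'!l + j)" unfolding EW_def using a by blast
    moreover have "(SOME v. \<exists>l' i' j'. l'<L \<and> i'<ms!Suc l' \<and> j'<ms!l' \<and> poff ms' l + i*ms'!l + j = poff ms' l' + i'*ms'!l' + j' \<and> v = \<theta> (poff ms l' + i'*ms!l' + j'))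
        = \<theta> (poff ms l + i*ms!l + j)"
    proof (rule some_equality)
      show "\<exists>l' i' j'. l'<L \<and> i'<ms!Suc l' \<and> j'<ms!l' \<and> poff ms' l + i*ms'!l + j = poff ms' l' + i'*ms'!l' + j' \<and> \<theta> (poff ms l + i*ms!l + j) = \<theta> (poff ms l' + i'*ms!l' + j')"
        using a by blast
    next
      fix v assume "\<exists>l' i' j'. l'<L \<and> i'<ms!Suc l' \<and> j'<ms!l' \<and> poff ms' l + i*ms'!l + j = poff ms' l' + i'*ms'!l' + j' \<and> v = \<theta> (poff ms l' + i'*ms!l' + j')"
      then obtain l' i' j' where c: "l'<L" "i'<ms!Suc l'" "j'<ms!l'" "poff ms' l + i*ms'!l + j = poff ms' l' + i'*ms'!l' + j'" "v = \<theta> (poff ms l' + i'*ms!l' + j')" by blast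
      have "i' < ms'!Suc l'" "j' < ms'!l'" using c le by (auto intro: less_le_trans)
      from enc_inj[OF b this c(4)] c(5) show "v = \<theta> (poff ms l + i*ms!l + j)" by simp
    qed
    ultimately show ?thesis by (simp add: th_def)
  qed
  have notEB: "\<not> EB (poff ms' l + i*ms'!l + j)" if a: "i<ms'!Suc l" "j<ms'!l" for l i j
  proof
    assume "EB (poff ms' l + i*ms'!l + j)"
    then obtain l' i' where c: "l'<L" "i'<ms!Suc l'" "poff ms' l + i*ms'!l + j = poff ms' l' + ms'!Suc l' * ms'!l' + i'"
      unfolding EB_def by blast
    have "i' < ms'!Suc l'" using c le by (auto intro: less_le_trans)
    from enc_benc[OF a this] c(3) show False by simp
  qed
  have notEW: "\<not> EW (poff ms' l + i*ms'!l + j)" if a: "i<ms'!Suc l" "j<ms'!l" "\<not> (i < ms!Suc l \<and> j < ms!l)" for l i j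
  proof
    assume "EW (poff ms' l + i*ms'!l + j)"
    then obtain l' i' j' where c: "l'<L" "i'<ms!Suc l'" "j'<ms!l'" "poff ms' l + i*ms'!l + j = poff ms' l' + i'*ms'!l' + j'"
      unfolding EW_def by blast
    have "i' < ms'!Suc l'" "j' < ms'!l'" using c le by (auto intro: less_le_trans)
    from enc_inj[OF a(1,2) this c(4)] c a(3) show False by simp
  qed
  have thZ: "th (poff ms' l + i*ms'!l + j) = 0"
    if a: "i<ms'!Suc l" "j<ms'!l" "\<not> (i < ms!Suc l \<and> j < ms!l)" for l i j
    using notEW[OF a] notEB[OF a(1,2)] by (simp add: th_def)
  have thB: "th (poff ms' l + ms'!Suc l * ms'!l + i) = \<theta> (poff ms l + ms!Suc l * ms!l + i)"
    if a: "l<L" "i<ms!Suc l" for l i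
  proof -
    have b: "i < ms'!Suc l" using a le by (auto intro: less_le_trans)
    have nw: "\<not> EW (poff ms' l + ms'!Suc l * ms'!l + i)"
    proof
      assume "EW (poff ms' l + ms'!Suc l * ms'!l + i)"
      then obtain l' i' j' where c: "l'<L" "i'<ms!Suc l'" "j'<ms!l'" "poff ms' l + ms'!Suc l * ms'!l + i = poff ms' l' + i'*ms'!l' + j'"
        unfolding EW_def by blast
      have "i' < ms'!Suc l'" "j' < ms'!l'" using c le by (auto intro: less_le_trans)
      from enc_benc[OF this b] c(4) show False by simp
    qed
    have "EB (poff ms' l + ms'!Suc l * ms'!l + i)" unfolding EB_def using a by blast
    moreover have "(SOME v. \<exists>l' i'. l'<L \<and> i'<ms!Suc l' \<and> poff ms' l + ms'!Suc l * ms'!l + i = poff ms' l' + ms'!Suc l' * ms'!l' + i' \<and> v = \<theta> (poff ms l' + ms!Suc l' * ms!l' + i'))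
        = \<theta> (poff ms l + ms!Suc l * ms!l + i)"
    proof (rule some_equality)
      show "\<exists>l' i'. l'<L \<and> i'<ms!Suc l' \<and> poff ms' l + ms'!Suc l * ms'!l + i = poff ms' l' + ms'!Suc l' * ms'!l' + i' \<and> \<theta> (poff ms l + ms!Suc l * ms!l + i) = \<theta> (poff ms l' + ms!Suc l' * ms!l' + i')"
        using a by blast
    next
      fix v assume "\<exists>l' i'. l'<L \<and> i'<ms!Suc l' \<and> poff ms' l + ms'!Suc l * ms'!l + i = poff ms' l' + ms'!Suc l' * ms'!l' + i' \<and> v = \<theta> (poff ms l' + ms!Suc l' * ms!l' + i')"
      then obtain l' i' where c: "l'<L" "i'<ms!Suc l'" "poff ms' l + ms'!Suc l * ms'!l + i = poff ms' l' + ms'!Suc l' * ms'!l' + i'" "v = \<theta> (poff ms l' + ms!Suc l' * ms!l' + i')" by blast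
      have "i' < ms'!Suc l'" using c le by (auto intro: less_le_trans)
      from benc_inj[OF b this c(3)] c(4) show "v = \<theta> (poff ms l + ms!Suc l * ms!l + i)" by simp
    qed
    ultimately show ?thesis using nw by (simp add: th_def)
  qed
  have pL: "poff ms' (Suc l) \<le> nparams ms'" if "l < L" for l
    using that d by (simp add: nparams_def poff_mono)
  have thP: "th \<in> params (nparams ms')"
    unfolding params_def
  proof (intro CollectI allI impI)
    fix k assume k: "nparams ms' \<le> k"
    have "\<not> EW k"
    proof
      assume "EW k"
      then obtain l i j where c: "l<L" "i<ms!Suc l" "j<ms!l" "k = poff ms' l + i*ms'!l + j" unfolding EW_def by blast
      have "i < ms'!Suc l" "j < ms'!l" using c le by (auto intro: less_le_trans)
      from enc_lt_poff[OF this] pL[OF c(1)] c(4) k show False by linarith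
    qed
    moreover have "\<not> EB k"
    proof
      assume "EB k"
      then obtain l i where c: "l<L" "i<ms!Suc l" "k = poff ms' l + ms'!Suc l * ms'!l + i" unfolding EB_def by blast
      have "i < ms'!Suc l" using c le by (auto intro: less_le_trans)
      from benc_lt_poff[OF this] pL[OF c(1)] c(3) k show False by linarith
    qed
    ultimately show "th k = 0" by (simp add: th_def)
  qed
  define lp where "lp = l0 - 1"
  have lp: "Suc lp = l0" "lp < L" using l0 by (auto simp: lp_def)
  define k0 where "k0 = poff ms' lp + (ms'!l0 - 1) * ms'!lp + 0"
  have i0: "ms'!l0 - 1 < ms'!Suc lp" "0 < ms'!lp" "ms'!l0 - 1 \<ge> ms!Suc lp"
  proof -
    have "ms'!lp \<ge> 1" using pos' lp by simp
    then show "ms'!l0 - 1 < ms'!Suc lp" "0 < ms'!lp" "ms'!l0 - 1 \<ge> ms!Suc lp" using lp l0 by auto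
  qed
  have k0lt: "k0 < nparams ms'"
    unfolding k0_def using enc_lt_poff[OF i0(1,2)] pL[OF lp(2)] by linarith
  have cmp: "compat ms ms' \<theta> th2" if agree: "\<forall>k. k \<noteq> k0 \<longrightarrow> th2 k = th k" for th2
    unfolding compat_def Wt_def Bs_def
  proof (intro conjI allI impI)
    fix l i j assume a: "l < depth ms" "i < ms!Suc l" "j < ms'!l"
    have b: "i < ms'!Suc l" using a le L_def by (auto intro: less_le_trans)
    have "poff ms' l + i*ms'!l + j \<noteq> k0"
    proof
      assume "poff ms' l + i*ms'!l + j = k0"
      from enc_inj[OF b a(3) i0(1,2)] this a(2) i0(3) show False unfolding k0_def by simp
    qed
    then have "th2 (poff ms' l + i*ms'!l + j) = th (poff ms' l + i*ms'!l + j)" using agree by simp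
    also have "\<dots> = (if j < ms!l then \<theta> (poff ms l + i*ms!l + j) else 0)"
      using thW[of l i j] thZ[of i l j] a b L_def by auto
    finally show "th2 (poff ms' l + i*ms'!l + j) = (if j < ms!l then \<theta> (poff ms l + i*ms!l + j) else 0)" .
  next
    fix l i assume a: "l < depth ms" "i < ms!Suc l"
    have b: "i < ms'!Suc l" using a le L_def by (auto intro: less_le_trans)
    have "poff ms' l + ms'!Suc l * ms'!l + i \<noteq> k0"
      using enc_benc[OF i0(1,2) b] unfolding k0_def by metis
    then show "th2 (poff ms' l + ms'!Suc l * ms'!l + i) = \<theta> (poff ms l + ms!Suc l * ms!l + i)"
      using agree thB[of l i] a L_def by simp
  qed
  have le2: "\<forall>l\<le>depth ms. ms!l \<le> ms'!l" using le L_def by simp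
  have "\<forall>t. nn_out \<sigma> ms' (th(k0 := t)) = nn_out \<sigma> ms \<theta>"
    using nn_out_eq[OF cmp le2 len v(1)] by simp
  moreover have "nn_out \<sigma> ms' th = nn_out \<sigma> ms \<theta>"
    using nn_out_eq[OF cmp le2 len v(1)] by simp
  ultimately show ?thesis using thP k0lt by blast
qed


theorem mainTheorem12:
  fixes \<sigma> :: "real \<Rightarrow> real" and lossf :: "real \<Rightarrow> real \<Rightarrow> real"
    and ms ms' :: "nat list" and f :: "(nat \<Rightarrow> real) \<Rightarrow> real"
  assumes "\<forall>t. \<sigma> differentiable (at t)"
    and "admissible_loss lossf"
    and "valid_arch ms" and "valid_arch ms'"
    and "narrower ms ms'"
    and "f \<in> range (nn_out \<sigma> ms)"
  shows "has_LLR lossf (nn_out \<sigma> ms') (nparams ms') f (O_LLR lossf (nn_out \<sigma> ms') (nparams ms') f)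
     \<and> O_LLR lossf (nn_out \<sigma> ms') (nparams ms') f < nparams ms'"
proof -
  obtain \<theta> where f: "f = nn_out \<sigma> ms \<theta>" using assms(6) by auto
  define M where "M = nparams ms'"
  define h where "h = nn_out \<sigma> ms'"
  obtain th k0 where th: "th \<in> params M" "k0 < M" "\<forall>t. h (th(k0 := t)) = f" "h th = f"
    using main_embed[OF assms(3,4,5), of \<sigma> \<theta>] f unfolding M_def h_def by blast
  have lnn: "lossf u v \<ge> 0" and l0: "lossf u v = 0 \<longleftrightarrow> u = v" for u v
    using assms(2) by (auto simp: admissible_loss_def)
  define p where "p k = pderiv_param h th k" for k
  have pk0: "p k0 = (\<lambda>x. 0)"
  proof
    fix x
    have "(\<lambda>t. h (th(k0 := t)) x) = (\<lambda>t. f x)" using th(3) by simp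
    then show "p k0 x = 0" unfolding p_def pderiv_param_def
      by (simp add: DERIV_imp_deriv)
  qed
  have "card {k. k<M \<and> p k \<noteq> (\<lambda>x. 0)} \<le> card ({..<M} - {k0})"
    by (rule card_mono) (use pk0 in auto)
  also have "\<dots> = M - 1" using th(2) by simp
  finally obtain xs n where n: "n \<le> M - 1" and
    H: "\<forall>a. (\<forall>i<n. (\<Sum>k<M. a k * p k (xs i)) = 0) \<longrightarrow> (\<forall>x. (\<Sum>k<M. a k * p k x) = 0)"
    using pts_exist by blast
  have nM: "n < M" using n th(2) by simp
  have tan: "tangent h M th = {(\<lambda>x. f x + (\<Sum>k<M. a k * p k x)) | a. True}"
    unfolding tangent_def p_def using th(4) by simp
  have fT: "f \<in> tangent h M th" unfolding tan by (auto intro!: exI[of _ "\<lambda>_. 0"])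
  have lzz: "lossf u u = 0" for u using l0 by simp
  have ef: "emp_loss lossf n xs f f = 0" by (simp add: emp_loss_def lzz)
  have enn: "emp_loss lossf n xs f v \<ge> 0" for v
    by (simp add: emp_loss_def lnn sum_nonneg)
  have LLR: "has_LLR lossf h M f n"
    unfolding has_LLR_def target_set_def
  proof (intro exI bexI)
    show "th \<in> {\<theta> \<in> params M. h \<theta> = f}" using th by simp
    show "{u \<in> tangent h M th. \<forall>v\<in>tangent h M th. emp_loss lossf n xs f u \<le> emp_loss lossf n xs f v} = {f}"
    proof (intro equalityI subsetI)
      fix u assume "u \<in> {u \<in> tangent h M th. \<forall>v\<in>tangent h M th. emp_loss lossf n xs f u \<le> emp_loss lossf n xs f v}"
      then have uT: "u \<in> tangent h M th" and um: "emp_loss lossf n xs f u \<le> 0"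
        using fT ef by auto
      obtain a where u: "u = (\<lambda>x. f x + (\<Sum>k<M. a k * p k x))" using uT unfolding tan by blast
      have "\<forall>i<n. (\<Sum>k<M. a k * p k (xs i)) = 0"
      proof (intro allI impI)
        fix i assume i: "i < n"
        then have "n \<noteq> 0" by simp
        then have "(\<Sum>i<n. lossf (u (xs i)) (f (xs i))) \<le> 0"
          using um by (simp add: emp_loss_def divide_le_0_iff)
        then have "(\<Sum>i<n. lossf (u (xs i)) (f (xs i))) = 0"
          by (simp add: antisym lnn sum_nonneg)
        then have "lossf (u (xs i)) (f (xs i)) = 0" using i
          by (subst (asm) sum_nonneg_eq_0_iff) (auto simp: lnn)
        then show "(\<Sum>k<M. a k * p k (xs i)) = 0" using l0 u by simp
      qed
      with H have "\<forall>x. (\<Sum>k<M. a k * p k x) = 0" by blast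
      then show "u \<in> {f}" using u by simp
    next
      fix u assume "u \<in> {f}"
      then show "u \<in> {u \<in> tangent h M th. \<forall>v\<in>tangent h M th. emp_loss lossf n xs f u \<le> emp_loss lossf n xs f v}"
        using fT ef enn by auto
    qed
  qed
  have "has_LLR lossf h M f (O_LLR lossf h M f)"
    unfolding O_LLR_def by (rule LeastI[where P="has_LLR lossf h M f", OF LLR])
  moreover have "O_LLR lossf h M f \<le> n"
    unfolding O_LLR_def by (rule Least_le[where P="has_LLR lossf h M f", OF LLR])
  ultimately show ?thesis using nM unfolding M_def h_def by simp
qed

end
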